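(* Let $f:\mathbb{R}^d\to\mathbb{R}$ be twice differentiable with $f^*:=\sup_\theta f(\theta)$ and $f(\theta)<f^*$ for all $\theta$. Suppose (i) $f$ is $L_1$ non-uniform smooth and (ii) $f$ satisfies the reversed Łojasiewicz inequality $\|\nabla f(\theta)\|_2\le\nu[f^*-f(\theta)]$ for all $\theta$, with $\nu>0$. Then $\theta\mapsto\ln(f^*-f(\theta))$ is $L_1\nu$-smooth.
   Context: $f$ is $L_1$ non-uniform smooth: $|f(\theta)-f(\theta')-\langle\nabla f(\theta'),\theta-\theta'\rangle|\le\frac{L_1\|\nabla f(\theta')\|_2}{2}\|\theta-\theta'\|_2^2$ for all $\theta,\theta'$. A function $g$ is $M$-smooth if $\nabla^2 g(\theta)\preceq M I$ for all $\theta$ (equivalently, here, the one-sided quadratic upper bound $g(\theta')\le g(\theta)+\langle\nabla g(\theta),\theta'-\theta\rangle+\frac M2\|\theta'-\theta\|_2^2$). *)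

theory Defs
  imports "HOL-Analysis.Analysis"
begin

definition twice_diff_with_grad :: "('a::euclidean_space \<Rightarrow> real) \<Rightarrow> ('a \<Rightarrow> 'a) \<Rightarrow> bool" where
  "twice_diff_with_grad f G \<longleftrightarrow> (\<forall>x. GDERIV f x :> G x) \<and> (\<forall>x. G differentiable (at x))"

text \<open>M-smoothness: twice differentiable with Hessian \<preceq> M I, i.e. the quadratic
  form of the Hessian (derivative of the gradient) is bounded by M |v|^2.\<close>
definition M_smooth :: "real \<Rightarrow> ('a::euclidean_space \<Rightarrow> real) \<Rightarrow> bool" where
  "M_smooth M g \<longleftrightarrow> (\<exists>G. twice_diff_with_grad g G \<and>
      (\<forall>x v. (frechet_derivative G (at x) v) \<bullet> v \<le> M * (norm v)\<^sup>2))"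

definition nonuniform_smooth :: "real \<Rightarrow> ('a::euclidean_space \<Rightarrow> real) \<Rightarrow> ('a \<Rightarrow> 'a) \<Rightarrow> bool" where
  "nonuniform_smooth L1 f G \<longleftrightarrow> (\<forall>\<theta> \<theta>'.
      \<bar>f \<theta> - f \<theta>' - G \<theta>' \<bullet> (\<theta> - \<theta>')\<bar> \<le> L1 * norm (G \<theta>') / 2 * (norm (\<theta> - \<theta>'))\<^sup>2)"

end

theory Submission
  imports Defs
begin

lemma hess_lower:
  fixes f :: "real^'d \<Rightarrow> real" and G :: "real^'d \<Rightarrow> real^'d"
  assumes twice: "twice_diff_with_grad f G"
    and nus: "nonuniform_smooth L1 f G"
  shows "frechet_derivative G (at x) v \<bullet> v \<ge> - (L1 * norm (G x) * (norm v)\<^sup>2)"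
proof -
  define DG where "DG = frechet_derivative G (at x)"
  have dG: "(G has_derivative DG) (at x)"
    using twice unfolding twice_diff_with_grad_def DG_def
    using frechet_derivative_works by blast
  have contG: "continuous_on UNIV G"
    using twice unfolding twice_diff_with_grad_def
    by (meson differentiable_imp_continuous_within continuous_at_imp_continuous_on)
  define \<rho> where "\<rho> t = G (x + t *\<^sub>R v) \<bullet> v" for t :: real
  have lin: "linear DG" using dG has_derivative_linear by blast
  have d\<rho>: "(\<rho> has_real_derivative (DG v \<bullet> v)) (at 0)"
  proof -
    have "((\<lambda>t::real. x + t *\<^sub>R v) has_derivative (\<lambda>t. t *\<^sub>R v)) (at 0)"
      by (auto intro!: derivative_eq_intros)
    moreover have "(G has_derivative DG) (at (x + 0 *\<^sub>R v))" using dG by simp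
    ultimately have "((\<lambda>t::real. G (x + t *\<^sub>R v)) has_derivative (\<lambda>t. DG (t *\<^sub>R v))) (at 0)"
      using diff_chain_at[of "\<lambda>t::real. x + t *\<^sub>R v" "\<lambda>t. t *\<^sub>R v" 0 G DG] by (simp add: o_def)
    then have "(\<rho> has_derivative (\<lambda>t. DG (t *\<^sub>R v) \<bullet> v)) (at 0)"
      unfolding \<rho>_def by (auto intro!: derivative_eq_intros)
    moreover have "(\<lambda>t. DG (t *\<^sub>R v) \<bullet> v) = (\<lambda>t. (DG v \<bullet> v) * t)"
      using linear_scale[OF lin] by (auto simp: algebra_simps)
    ultimately show ?thesis by (simp add: has_field_derivative_def)
  qed
  then have lim1: "((\<lambda>t. (\<rho> t - \<rho> 0) / t) \<longlongrightarrow> DG v \<bullet> v) (at_right 0)"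
    unfolding has_field_derivative_iff by (auto intro: filterlim_mono simp: at_le)
  have cG: "isCont G y" for y
    using twice unfolding twice_diff_with_grad_def
    by (meson differentiable_imp_continuous_within)
  have gl: "((\<lambda>t. G (x + t *\<^sub>R v)) \<longlongrightarrow> G x) (at_right 0)"
    by (rule isCont_tendsto_compose[OF cG]) (auto intro!: tendsto_eq_intros)
  have "((\<lambda>t. -(L1/2) * (norm (G x) + norm (G (x + t *\<^sub>R v))) * (norm v)\<^sup>2)
        \<longlongrightarrow> -(L1/2) * (norm (G x) + norm (G x)) * (norm v)\<^sup>2) (at_right 0)"
    by (intro tendsto_intros gl)
  then have lim2: "((\<lambda>t. -(L1/2) * (norm (G x) + norm (G (x + t *\<^sub>R v))) * (norm v)\<^sup>2)
        \<longlongrightarrow> - (L1 * norm (G x) * (norm v)\<^sup>2)) (at_right 0)"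
    by (simp add: algebra_simps)
  have ev: "\<forall>\<^sub>F t in at_right 0. -(L1/2) * (norm (G x) + norm (G (x + t *\<^sub>R v))) * (norm v)\<^sup>2
      \<le> (\<rho> t - \<rho> 0) / t"
    unfolding eventually_at_right_field
  proof (intro exI[of _ 1] conjI allI impI, simp)
    fix t :: real assume tp: "0 < t" and "t < 1"
    have a: "\<bar>f (x + t *\<^sub>R v) - f x - G x \<bullet> (t *\<^sub>R v)\<bar> \<le> L1 * norm (G x) / 2 * (norm (t *\<^sub>R v))\<^sup>2"
      using nus[unfolded nonuniform_smooth_def, rule_format, of "x + t *\<^sub>R v" x] by simp
    have b: "\<bar>f x - f (x + t *\<^sub>R v) - G (x + t *\<^sub>R v) \<bullet> (- (t *\<^sub>R v))\<bar>
        \<le> L1 * norm (G (x + t *\<^sub>R v)) / 2 * (norm (- (t *\<^sub>R v)))\<^sup>2"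
      using nus[unfolded nonuniform_smooth_def, rule_format, of x "x + t *\<^sub>R v"] by simp
    have "t * (\<rho> t - \<rho> 0) \<ge> -(L1/2) * (norm (G x) + norm (G (x + t *\<^sub>R v))) * (t * norm v)\<^sup>2"
    proof -
      have a': "f (x + t *\<^sub>R v) - f x - t * (G x \<bullet> v) \<ge> - (L1 * norm (G x) / 2 * (t * norm v)\<^sup>2)"
        using abs_le_D2[OF a] tp by (simp add: inner_scaleR_right)
      have b': "f x - f (x + t *\<^sub>R v) + t * (G (x + t *\<^sub>R v) \<bullet> v) \<ge> - (L1 * norm (G (x + t *\<^sub>R v)) / 2 * (t * norm v)\<^sup>2)"
        using abs_le_D2[OF b] tp by (simp add: inner_scaleR_right)
      have "t * (\<rho> t - \<rho> 0) = (f (x + t *\<^sub>R v) - f x - t * (G x \<bullet> v)) + (f x - f (x + t *\<^sub>R v) + t * (G (x + t *\<^sub>R v) \<bullet> v))"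
        unfolding \<rho>_def by (simp add: algebra_simps)
      also have "\<dots> \<ge> - (L1 * norm (G x) / 2 * (t * norm v)\<^sup>2) - (L1 * norm (G (x + t *\<^sub>R v)) / 2 * (t * norm v)\<^sup>2)"
        using a' b' by linarith
      finally show ?thesis by (simp add: algebra_simps)
    qed
    then have "t * (-(L1/2) * (norm (G x) + norm (G (x + t *\<^sub>R v))) * (norm v)\<^sup>2) * t \<le> (\<rho> t - \<rho> 0) * t"
      by (simp add: power_mult_distrib power2_eq_square algebra_simps)
    then have "t * (-(L1/2) * (norm (G x) + norm (G (x + t *\<^sub>R v))) * (norm v)\<^sup>2) \<le> (\<rho> t - \<rho> 0)"
      using tp by (simp only: mult_le_cancel_right_pos)
    then show "-(L1/2) * (norm (G x) + norm (G (x + t *\<^sub>R v))) * (norm v)\<^sup>2 \<le> (\<rho> t - \<rho> 0) / t"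
      using tp by (simp add: pos_le_divide_eq mult.commute)
  qed
  have "- (L1 * norm (G x) * (norm v)\<^sup>2) \<le> DG v \<bullet> v"
    using tendsto_le[OF _ lim1 lim2 ev] by simp
  then show ?thesis unfolding DG_def .
qed

theorem lemma1:
  fixes f :: "real^'d \<Rightarrow> real" and G :: "real^'d \<Rightarrow> real^'d" and L1 \<nu> :: real
  assumes twice: "twice_diff_with_grad f G"
    and bdd: "bdd_above (range f)"
    and below: "\<forall>\<theta>. f \<theta> < (SUP \<theta>. f \<theta>)"
    and nus: "nonuniform_smooth L1 f G"
    and nu_pos: "\<nu> > 0"
    and loj: "\<forall>\<theta>. norm (G \<theta>) \<le> \<nu> * ((SUP \<theta>. f \<theta>) - f \<theta>)"
  shows "M_smooth (L1 * \<nu>) (\<lambda>\<theta>. ln ((SUP \<theta>. f \<theta>) - f \<theta>))"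
proof -
  define S where "S = (SUP \<theta>. f \<theta>)"
  define H where "H \<theta> = S - f \<theta>" for \<theta>
  have Hpos: "H \<theta> > 0" for \<theta> using below unfolding H_def S_def by auto
  have df: "(f has_derivative (\<lambda>h. h \<bullet> G x)) (at x)" for x
    using twice unfolding twice_diff_with_grad_def gderiv_def by blast
  have dG: "(G has_derivative frechet_derivative G (at x)) (at x)" for x
    using twice unfolding twice_diff_with_grad_def using frechet_derivative_works by blast
  have L1G: "L1 * norm (G x) \<ge> 0" for x
  proof -
    define e :: "real^'d" where "e = 1"
    have e: "e \<noteq> 0" unfolding e_def by (simp add: vec_eq_iff)
    have "0 \<le> \<bar>f (x + e) - f x - G x \<bullet> (x + e - x)\<bar>" by simp
    also have "\<dots> \<le> L1 * norm (G x) / 2 * (norm (x + e - x))\<^sup>2"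
      using nus unfolding nonuniform_smooth_def by blast
    finally have "0 \<le> L1 * norm (G x) * (norm e)\<^sup>2" by simp
    moreover have "(norm e)\<^sup>2 > 0" using e by simp
    ultimately show ?thesis by (simp add: zero_le_mult_iff)
  qed
  have L1pos: "L1 \<ge> 0"
  proof (rule ccontr)
    assume "\<not> L1 \<ge> 0"
    then have "G x = 0" for x using L1G[of x] by (smt (verit) mult_neg_pos zero_less_norm_iff)
    then have "f a = f b" for a b
    proof -
      have "\<bar>f a - f b - G b \<bullet> (a - b)\<bar> \<le> L1 * norm (G b) / 2 * (norm (a - b))\<^sup>2"
        using nus unfolding nonuniform_smooth_def by blast
      then show ?thesis using \<open>\<And>x. G x = 0\<close>[of b] by simp
    qed
    then have "range f = {f 0}" by auto
    then have "(SUP \<theta>. f \<theta>) = f 0" by simp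
    then show False using below by auto
  qed
  define Gg where "Gg \<theta> = - (inverse (H \<theta>) *\<^sub>R G \<theta>)" for \<theta>
  have g1: "GDERIV (\<lambda>\<theta>. ln (S - f \<theta>)) x :> Gg x" for x
  proof -
    have "((\<lambda>\<theta>. S - f \<theta>) has_derivative (\<lambda>h. 0 - h \<bullet> G x)) (at x)"
      by (intro has_derivative_diff has_derivative_const df)
    moreover have "(\<lambda>h. 0 - h \<bullet> G x) = (\<lambda>h. h \<bullet> (- G x))" by auto
    ultimately have a: "GDERIV (\<lambda>\<theta>. S - f \<theta>) x :> - G x" unfolding gderiv_def by simp
    have b: "DERIV ln (S - f x) :> inverse (S - f x)"
      using Hpos[of x] unfolding H_def by (auto intro!: derivative_eq_intros simp: inverse_eq_divide)
    have "GDERIV (\<lambda>\<theta>. ln (S - f \<theta>)) x :> inverse (S - f x) *\<^sub>R (- G x)"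
      by (rule GDERIV_DERIV_compose[OF a b])
    then show ?thesis unfolding Gg_def H_def by simp
  qed
  define DGg where "DGg x v = - (inverse (H x) *\<^sub>R frechet_derivative G (at x) v + (inverse (H x) * (G x \<bullet> v) * inverse (H x)) *\<^sub>R G x)" for x v
  have g2: "(Gg has_derivative DGg x) (at x)" for x
  proof -
    have "((\<lambda>\<theta>. - (inverse (S - f \<theta>) *\<^sub>R G \<theta>)) has_derivative DGg x) (at x)"
      using Hpos[of x] unfolding DGg_def H_def
      by (auto intro!: derivative_eq_intros df dG simp: inner_commute)
    then show ?thesis unfolding Gg_def H_def .
  qed
  have "frechet_derivative Gg (at x) v \<bullet> v \<le> L1 * \<nu> * (norm v)\<^sup>2" for x v
  proof -
    have fd: "frechet_derivative Gg (at x) = DGg x" using frechet_derivative_at[OF g2[of x]] by simp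
    have hl: "- (frechet_derivative G (at x) v \<bullet> v) \<le> L1 * norm (G x) * (norm v)\<^sup>2"
      using hess_lower[OF twice nus, of x v] by simp
    have "DGg x v \<bullet> v = inverse (H x) * (- (frechet_derivative G (at x) v \<bullet> v)) - (inverse (H x))\<^sup>2 * (G x \<bullet> v)\<^sup>2"
      unfolding DGg_def by (simp add: inner_add_left power2_eq_square algebra_simps)
    also have "\<dots> \<le> inverse (H x) * (- (frechet_derivative G (at x) v \<bullet> v))" by simp
    also have "\<dots> \<le> inverse (H x) * (L1 * norm (G x) * (norm v)\<^sup>2)"
      using mult_left_mono[OF hl, of "inverse (H x)"] Hpos[of x] by simp
    also have "\<dots> = L1 * (norm (G x) / H x) * (norm v)\<^sup>2" by (simp add: field_simps)
    also have "\<dots> \<le> L1 * \<nu> * (norm v)\<^sup>2"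
    proof -
      have "norm (G x) / H x \<le> \<nu>" using loj Hpos[of x] unfolding H_def S_def
        by (simp add: pos_divide_le_eq)
      then have "L1 * (norm (G x) / H x) \<le> L1 * \<nu>" using L1pos by (rule mult_left_mono)
      then show ?thesis by (rule mult_right_mono) simp
    qed
    finally show ?thesis using fd by simp
  qed
  then show ?thesis unfolding M_smooth_def twice_diff_with_grad_def S_def[symmetric]
    using g1 g2 by (metis differentiableI)
qed

end
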